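(* Let $P=(X,\prec)$ be a finite twin-free interval order containing no induced subposet isomorphic to any of $\mathbf{4}+\mathbf{1}$, $\mathbf{3}+\mathbf{1}+\mathbf{1}$, $Z$, $D$, $Y$, or the dual of $Y$. Then there exists a closed interval representation $\{I(x):x\in X\}$ of $P$ such that: (1) no interval strictly contains two other intervals; (2) no interval is strictly contained in two other intervals; (3) if $I(u)\subsetneq I(v)$ then there are unique $x,y\in X$ such that $x$ peeks into $vu$ from the left and $y$ peeks into $vu$ from the right.
   Context: Posets are strict (irreflexive) partial orders; twins are points with exactly the same comparabilities; twin-free means no two distinct twins. A closed interval representation of $P$ assigns a closed real interval $I(x)=[L(x),R(x)]$ to each $x$ with $x\prec y$ iff $R(x)<L(y)$; $P$ is an interval order if one exists. $I(u)$ is strictly contained in $I(v)$ if $I(u)\subset I(v)$ and they do not have identical endpoints. For $u,v,x$ with $I(u)\subsetneq I(v)$: $x$ peeks into $vu$ if $I(x)$ meets $I(v)$ but not $I(u)$; from the left if moreover $R(x)\le L(u)$; from the right if moreover $R(u)\le L(x)$. Forbidden posets (unlisted, non-transitively-implied pairs incomparable): $\mathbf{4}+\mathbf{1}$: $a\prec b\prec c\prec d$ plus isolated $x$. $\mathbf{3}+\mathbf{1}+\mathbf{1}$: $a\prec b\prec c$ plus isolated $x,y$. $Z$: $a,b,c,d,x,y$ with $a\prec b\prec c\prec d$, $x\prec d$, $a\prec y$. $D$: $a,b,c,d,x$ with $a\prec b\prec d$, $a\prec c\prec d$. $Y$: $a,b,c,d,x$ with $a\prec d\prec b$, $a\prec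 d\prec c$. The dual reverses all comparabilities. *)

theory Defs
  imports Complex_Main
begin

definition strict_poset :: "'a set \<Rightarrow> ('a \<Rightarrow> 'a \<Rightarrow> bool) \<Rightarrow> bool" where
  "strict_poset X lt \<longleftrightarrow>
     (\<forall>x\<in>X. \<not> lt x x) \<and>
     (\<forall>x\<in>X. \<forall>y\<in>X. \<forall>z\<in>X. lt x y \<and> lt y z \<longrightarrow> lt x z)"

definition twins :: "'a set \<Rightarrow> ('a \<Rightarrow> 'a \<Rightarrow> bool) \<Rightarrow> 'a \<Rightarrow> 'a \<Rightarrow> bool" where
  "twins X lt x y \<longleftrightarrow> (\<forall>z\<in>X. (lt z x \<longleftrightarrow> lt z y) \<and> (lt x z \<longleftrightarrow> lt y z))"

definition twin_free :: "'a set \<Rightarrow> ('a \<Rightarrow> 'a \<Rightarrow> bool) \<Rightarrow> bool" where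
  "twin_free X lt \<longleftrightarrow> (\<forall>x\<in>X. \<forall>y\<in>X. x \<noteq> y \<longrightarrow> \<not> twins X lt x y)"

definition interval_rep :: "'a set \<Rightarrow> ('a \<Rightarrow> 'a \<Rightarrow> bool) \<Rightarrow> ('a \<Rightarrow> real) \<Rightarrow> ('a \<Rightarrow> real) \<Rightarrow> bool" where
  "interval_rep X lt L R \<longleftrightarrow>
     (\<forall>x\<in>X. L x \<le> R x) \<and> (\<forall>x\<in>X. \<forall>y\<in>X. lt x y \<longleftrightarrow> R x < L y)"

definition interval_order :: "'a set \<Rightarrow> ('a \<Rightarrow> 'a \<Rightarrow> bool) \<Rightarrow> bool" where
  "interval_order X lt \<longleftrightarrow> strict_poset X lt \<and> (\<exists>L R. interval_rep X lt L R)"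

text \<open>A forbidden poset on \<open>{..<n}\<close> whose order is the transitive closure of the cover pairs S.
  X contains an induced copy if there is an injective map preserving and reflecting the order.\<close>
definition contains_induced :: "'a set \<Rightarrow> ('a \<Rightarrow> 'a \<Rightarrow> bool) \<Rightarrow> nat \<Rightarrow> (nat \<times> nat) set \<Rightarrow> bool" where
  "contains_induced X lt n S \<longleftrightarrow>
     (\<exists>f. inj_on f {..<n} \<and> f ` {..<n} \<subseteq> X \<and>
          (\<forall>i<n. \<forall>j<n. lt (f i) (f j) \<longleftrightarrow> (i, j) \<in> S\<^sup>+))"

text \<open>4+1: a=0 < b=1 < c=2 < d=3, x=4 isolated.\<close>
definition four_plus_one :: "(nat \<times> nat) set" where
  "four_plus_one = {(0,1),(1,2),(2,3)}"

text \<open>3+1+1: a=0 < b=1 < c=2, x=3, y=4 isolated.\<close>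
definition three_plus_one_plus_one :: "(nat \<times> nat) set" where
  "three_plus_one_plus_one = {(0,1),(1,2)}"

text \<open>Z: a=0 < b=1 < c=2 < d=3, x=4 < d, a < y=5.\<close>
definition Z_poset :: "(nat \<times> nat) set" where
  "Z_poset = {(0,1),(1,2),(2,3),(4,3),(0,5)}"

text \<open>D: a=0 < b=1 < d=3, a < c=2 < d, x=4 isolated.\<close>
definition D_poset :: "(nat \<times> nat) set" where
  "D_poset = {(0,1),(1,3),(0,2),(2,3)}"

text \<open>Y: a=0 < d=3 < b=1, d < c=2, x=4 isolated.\<close>
definition Y_poset :: "(nat \<times> nat) set" where
  "Y_poset = {(0,3),(3,1),(3,2)}"

definition Y_dual_poset :: "(nat \<times> nat) set" where
  "Y_dual_poset = converse Y_poset"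

definition strictly_contained :: "('a \<Rightarrow> real) \<Rightarrow> ('a \<Rightarrow> real) \<Rightarrow> 'a \<Rightarrow> 'a \<Rightarrow> bool" where
  "strictly_contained L R u v \<longleftrightarrow>
     L v \<le> L u \<and> R u \<le> R v \<and> (L u, R u) \<noteq> (L v, R v)"

definition meets :: "('a \<Rightarrow> real) \<Rightarrow> ('a \<Rightarrow> real) \<Rightarrow> 'a \<Rightarrow> 'a \<Rightarrow> bool" where
  "meets L R x y \<longleftrightarrow> L x \<le> R y \<and> L y \<le> R x"

definition peeks :: "('a \<Rightarrow> real) \<Rightarrow> ('a \<Rightarrow> real) \<Rightarrow> 'a \<Rightarrow> 'a \<Rightarrow> 'a \<Rightarrow> bool" where
  "peeks L R x v u \<longleftrightarrow> meets L R x v \<and> \<not> meets L R x u"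

definition peeks_left :: "('a \<Rightarrow> real) \<Rightarrow> ('a \<Rightarrow> real) \<Rightarrow> 'a \<Rightarrow> 'a \<Rightarrow> 'a \<Rightarrow> bool" where
  "peeks_left L R x v u \<longleftrightarrow> peeks L R x v u \<and> R x \<le> L u"

definition peeks_right :: "('a \<Rightarrow> real) \<Rightarrow> ('a \<Rightarrow> real) \<Rightarrow> 'a \<Rightarrow> 'a \<Rightarrow> 'a \<Rightarrow> bool" where
  "peeks_right L R x v u \<longleftrightarrow> peeks L R x v u \<and> R u \<le> L x"

end

theory Submission
  imports Defs
begin

lemma less5: "i < (5::nat) \<longleftrightarrow> i = 0 \<or> i = 1 \<or> i = 2 \<or> i = 3 \<or> i = 4" by auto

lemma ci5:
  assumes "distinct [a0,a1,a2,a3,a4]" "a0\<in>X" "a1\<in>X" "a2\<in>X" "a3\<in>X" "a4\<in>X" "S\<^sup>+ = T"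
   "\<And>i j. i<5 \<Longrightarrow> j<5 \<Longrightarrow> lt ([a0,a1,a2,a3,a4]!i) ([a0,a1,a2,a3,a4]!j) \<longleftrightarrow> (i,j)\<in>T"
  shows "contains_induced X lt 5 S"
  unfolding contains_induced_def
proof (intro exI conjI)
  let ?f = "\<lambda>i. [a0,a1,a2,a3,a4]!i"
  show "inj_on ?f {..<5}" using assms(1) by (intro inj_on_nth) auto
  show "?f ` {..<5} \<subseteq> X"
  proof
    fix z assume "z \<in> ?f ` {..<5}"
    then obtain i where "i < 5" "z = ?f i" by auto
    then show "z \<in> X" using assms(2-6) unfolding less5 by auto
  qed
  show "\<forall>i<5. \<forall>j<5. lt (?f i) (?f j) \<longleftrightarrow> (i,j) \<in> S\<^sup>+" using assms(7,8) by auto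
qed

lemma tc_fpo: "four_plus_one\<^sup>+ = {(0,1),(1,2),(2,3),(0,2),(1,3),(0,3)}"
proof
  have a: "(0,1) \<in> four_plus_one\<^sup>+" "(1,2) \<in> four_plus_one\<^sup>+" "(2,3) \<in> four_plus_one\<^sup>+"
    by (auto simp: four_plus_one_def)
  have b: "(0,2) \<in> four_plus_one\<^sup>+" "(1,3) \<in> four_plus_one\<^sup>+" using a by (meson trancl_trans)+
  have c: "(0,3) \<in> four_plus_one\<^sup>+" using a b by (meson trancl_trans)+
  show "{(0,1),(1,2),(2,3),(0,2),(1,3),(0::nat,3::nat)} \<subseteq> four_plus_one\<^sup>+" using a b c by simp
  show "four_plus_one\<^sup>+ \<subseteq> {(0,1),(1,2),(2,3),(0,2),(1,3),(0::nat,3::nat)}"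
  proof
    fix p assume "p \<in> four_plus_one\<^sup>+"
    then obtain i j where p: "p = (i,j)" "(i,j) \<in> four_plus_one\<^sup>+" by (cases p) auto
    from p(2) have "(i,j) \<in> {(0,1),(1,2),(2,3),(0,2),(1,3),(0::nat,3::nat)}"
      by (induction rule: trancl_induct) (auto simp: four_plus_one_def)
    then show "p \<in> {(0,1),(1,2),(2,3),(0,2),(1,3),(0::nat,3::nat)}" using p by simp
  qed
qed

lemma tc_tpopo: "three_plus_one_plus_one\<^sup>+ = {(0,1),(1,2),(0,2)}"
proof
  have a: "(0,1) \<in> three_plus_one_plus_one\<^sup>+" "(1,2) \<in> three_plus_one_plus_one\<^sup>+"
    by (auto simp: three_plus_one_plus_one_def)
  have b: "(0,2) \<in> three_plus_one_plus_one\<^sup>+" using a by (meson trancl_trans)+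
  show "{(0,1),(1,2),(0::nat,2::nat)} \<subseteq> three_plus_one_plus_one\<^sup>+" using a b by simp
  show "three_plus_one_plus_one\<^sup>+ \<subseteq> {(0,1),(1,2),(0::nat,2::nat)}"
  proof
    fix p assume "p \<in> three_plus_one_plus_one\<^sup>+"
    then obtain i j where p: "p = (i,j)" "(i,j) \<in> three_plus_one_plus_one\<^sup>+" by (cases p) auto
    from p(2) have "(i,j) \<in> {(0,1),(1,2),(0::nat,2::nat)}"
      by (induction rule: trancl_induct) (auto simp: three_plus_one_plus_one_def)
    then show "p \<in> {(0,1),(1,2),(0::nat,2::nat)}" using p by simp
  qed
qed

lemma tc_D: "D_poset\<^sup>+ = {(0,1),(1,3),(0,2),(2,3),(0,3)}"
proof
  have a: "(0,1) \<in> D_poset\<^sup>+" "(1,3) \<in> D_poset\<^sup>+" "(0,2) \<in> D_poset\<^sup>+" "(2,3) \<in> D_poset\<^sup>+"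
    by (auto simp: D_poset_def)
  have b: "(0,3) \<in> D_poset\<^sup>+" using a by (meson trancl_trans)+
  show "{(0,1),(1,3),(0,2),(2,3),(0::nat,3::nat)} \<subseteq> D_poset\<^sup>+" using a b by simp
  show "D_poset\<^sup>+ \<subseteq> {(0,1),(1,3),(0,2),(2,3),(0::nat,3::nat)}"
  proof
    fix p assume "p \<in> D_poset\<^sup>+"
    then obtain i j where p: "p = (i,j)" "(i,j) \<in> D_poset\<^sup>+" by (cases p) auto
    from p(2) have "(i,j) \<in> {(0,1),(1,3),(0,2),(2,3),(0::nat,3::nat)}"
      by (induction rule: trancl_induct) (auto simp: D_poset_def)
    then show "p \<in> {(0,1),(1,3),(0,2),(2,3),(0::nat,3::nat)}" using p by simp
  qed
qed

lemma tc_Y: "Y_poset\<^sup>+ = {(0,3),(3,1),(3,2),(0,1),(0,2)}"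
proof
  have a: "(0,3) \<in> Y_poset\<^sup>+" "(3,1) \<in> Y_poset\<^sup>+" "(3,2) \<in> Y_poset\<^sup>+"
    by (auto simp: Y_poset_def)
  have b: "(0,1) \<in> Y_poset\<^sup>+" "(0,2) \<in> Y_poset\<^sup>+" using a by (meson trancl_trans)+
  show "{(0,3),(3,1),(3,2),(0,1),(0::nat,2::nat)} \<subseteq> Y_poset\<^sup>+" using a b by simp
  show "Y_poset\<^sup>+ \<subseteq> {(0,3),(3,1),(3,2),(0,1),(0::nat,2::nat)}"
  proof
    fix p assume "p \<in> Y_poset\<^sup>+"
    then obtain i j where p: "p = (i,j)" "(i,j) \<in> Y_poset\<^sup>+" by (cases p) auto
    from p(2) have "(i,j) \<in> {(0,3),(3,1),(3,2),(0,1),(0::nat,2::nat)}"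
      by (induction rule: trancl_induct) (auto simp: Y_poset_def)
    then show "p \<in> {(0,3),(3,1),(3,2),(0,1),(0::nat,2::nat)}" using p by simp
  qed
qed

lemma tc_Yd: "Y_dual_poset\<^sup>+ = {(3,0),(1,3),(2,3),(1,0),(2,0)}"
proof
  have a: "(3,0) \<in> Y_dual_poset\<^sup>+" "(1,3) \<in> Y_dual_poset\<^sup>+" "(2,3) \<in> Y_dual_poset\<^sup>+"
    by (auto simp: Y_dual_poset_def Y_poset_def)
  have b: "(1,0) \<in> Y_dual_poset\<^sup>+" "(2,0) \<in> Y_dual_poset\<^sup>+" using a by (meson trancl_trans)+
  show "{(3,0),(1,3),(2,3),(1,0),(2::nat,0::nat)} \<subseteq> Y_dual_poset\<^sup>+" using a b by simp
  show "Y_dual_poset\<^sup>+ \<subseteq> {(3,0),(1,3),(2,3),(1,0),(2::nat,0::nat)}"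
  proof
    fix p assume "p \<in> Y_dual_poset\<^sup>+"
    then obtain i j where p: "p = (i,j)" "(i,j) \<in> Y_dual_poset\<^sup>+" by (cases p) auto
    from p(2) have "(i,j) \<in> {(3,0),(1,3),(2,3),(1,0),(2::nat,0::nat)}"
      by (induction rule: trancl_induct) (auto simp: Y_dual_poset_def Y_poset_def)
    then show "p \<in> {(3,0),(1,3),(2,3),(1,0),(2::nat,0::nat)}" using p by simp
  qed
qed


lemma po_irr: "strict_poset X lt \<Longrightarrow> p \<in> X \<Longrightarrow> \<not> lt p p"
  unfolding strict_poset_def by blast
lemma po_tr: "strict_poset X lt \<Longrightarrow> p \<in> X \<Longrightarrow> q \<in> X \<Longrightarrow> r \<in> X \<Longrightarrow> lt p q \<Longrightarrow> lt q r \<Longrightarrow> lt p r"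
  unfolding strict_poset_def by blast

lemma pat41:
  assumes po: "strict_poset X lt" and n: "\<not> contains_induced X lt 5 four_plus_one"
  and m: "a\<in>X" "b\<in>X" "c\<in>X" "d\<in>X" "x\<in>X"
  and r: "lt a b" "lt b c" "lt c d"
  and i: "\<not>lt x a" "\<not>lt a x" "\<not>lt x b" "\<not>lt b x" "\<not>lt x c" "\<not>lt c x" "\<not>lt x d" "\<not>lt d x"
  shows False
proof -
  note irr = po_irr[OF po] and tr = po_tr[OF po]
  have f: "lt a c" "lt b d" "lt a d" using tr m r by meson+
  have g: "\<not>lt b a" "\<not>lt c b" "\<not>lt d c" "\<not>lt c a" "\<not>lt d b" "\<not>lt d a"
    "\<not>lt a a" "\<not>lt b b" "\<not>lt c c" "\<not>lt d d" "\<not>lt x x"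
    using irr tr m r f by meson+
  have dist: "distinct [a,b,c,d,x]" using r f g i by auto
  have "contains_induced X lt 5 four_plus_one"
    apply (rule ci5[OF dist m tc_fpo])
    unfolding less5 using r f g i by auto
  with n show False by simp
qed

lemma pat311:
  assumes po: "strict_poset X lt" and n: "\<not> contains_induced X lt 5 three_plus_one_plus_one"
  and m: "a\<in>X" "b\<in>X" "c\<in>X" "x\<in>X" "y\<in>X"
  and r: "lt a b" "lt b c"
  and i: "\<not>lt x a" "\<not>lt a x" "\<not>lt x b" "\<not>lt b x" "\<not>lt x c" "\<not>lt c x"
         "\<not>lt y a" "\<not>lt a y" "\<not>lt y b" "\<not>lt b y" "\<not>lt y c" "\<not>lt c y" "\<not>lt x y" "\<not>lt y x"
  and ne: "x \<noteq> y"
  shows False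
proof -
  note irr = po_irr[OF po] and tr = po_tr[OF po]
  have f: "lt a c" using tr m r by meson+
  have g: "\<not>lt b a" "\<not>lt c b" "\<not>lt c a"
    "\<not>lt a a" "\<not>lt b b" "\<not>lt c c" "\<not>lt x x" "\<not>lt y y"
    using irr tr m r f by meson+
  have dist: "distinct [a,b,c,x,y]" using r f g i ne by auto
  have "contains_induced X lt 5 three_plus_one_plus_one"
    apply (rule ci5[OF dist m tc_tpopo])
    unfolding less5 using r f g i by auto
  with n show False by simp
qed

lemma patD:
  assumes po: "strict_poset X lt" and n: "\<not> contains_induced X lt 5 D_poset"
  and m: "a\<in>X" "b\<in>X" "c\<in>X" "d\<in>X" "x\<in>X"
  and r: "lt a b" "lt b d" "lt a c" "lt c d"
  and i: "\<not>lt b c" "\<not>lt c b"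
     "\<not>lt x a" "\<not>lt a x" "\<not>lt x b" "\<not>lt b x" "\<not>lt x c" "\<not>lt c x" "\<not>lt x d" "\<not>lt d x"
  and ne: "b \<noteq> c"
  shows False
proof -
  note irr = po_irr[OF po] and tr = po_tr[OF po]
  have f: "lt a d" using tr m r by meson+
  have g: "\<not>lt b a" "\<not>lt d b" "\<not>lt c a" "\<not>lt d c" "\<not>lt d a"
    "\<not>lt a a" "\<not>lt b b" "\<not>lt c c" "\<not>lt d d" "\<not>lt x x"
    using irr tr m r f by meson+
  have dist: "distinct [a,b,c,d,x]" using r f g i ne by auto
  have "contains_induced X lt 5 D_poset"
    apply (rule ci5[OF dist m tc_D])
    unfolding less5 using r f g i by auto
  with n show False by simp
qed

lemma patY:
  assumes po: "strict_poset X lt" and n: "\<not> contains_induced X lt 5 Y_poset"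
  and m: "a\<in>X" "b\<in>X" "c\<in>X" "d\<in>X" "x\<in>X"
  and r: "lt a d" "lt d b" "lt d c"
  and i: "\<not>lt b c" "\<not>lt c b"
     "\<not>lt x a" "\<not>lt a x" "\<not>lt x b" "\<not>lt b x" "\<not>lt x c" "\<not>lt c x" "\<not>lt x d" "\<not>lt d x"
  and ne: "b \<noteq> c"
  shows False
proof -
  note irr = po_irr[OF po] and tr = po_tr[OF po]
  have f: "lt a b" "lt a c" using tr m r by meson+
  have g: "\<not>lt d a" "\<not>lt b d" "\<not>lt c d" "\<not>lt b a" "\<not>lt c a"
    "\<not>lt a a" "\<not>lt b b" "\<not>lt c c" "\<not>lt d d" "\<not>lt x x"
    using irr tr m r f by meson+
  have dist: "distinct [a,b,c,d,x]" using r f g i ne by auto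
  have "contains_induced X lt 5 Y_poset"
    apply (rule ci5[OF dist m tc_Y])
    unfolding less5 using r f g i by auto
  with n show False by simp
qed

lemma patYd:
  assumes po: "strict_poset X lt" and n: "\<not> contains_induced X lt 5 Y_dual_poset"
  and m: "a\<in>X" "b\<in>X" "c\<in>X" "d\<in>X" "x\<in>X"
  and r: "lt d a" "lt b d" "lt c d"
  and i: "\<not>lt b c" "\<not>lt c b"
     "\<not>lt x a" "\<not>lt a x" "\<not>lt x b" "\<not>lt b x" "\<not>lt x c" "\<not>lt c x" "\<not>lt x d" "\<not>lt d x"
  and ne: "b \<noteq> c"
  shows False
proof -
  note irr = po_irr[OF po] and tr = po_tr[OF po]
  have f: "lt b a" "lt c a" using tr m r by meson+
  have g: "\<not>lt a d" "\<not>lt d b" "\<not>lt d c" "\<not>lt a b" "\<not>lt a c"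
    "\<not>lt a a" "\<not>lt b b" "\<not>lt c c" "\<not>lt d d" "\<not>lt x x"
    using irr tr m r f by meson+
  have dist: "distinct [a,b,c,d,x]" using r f g i ne by auto
  have "contains_induced X lt 5 Y_dual_poset"
    apply (rule ci5[OF dist m tc_Yd])
    unfolding less5 using r f g i by auto
  with n show False by simp
qed


definition dn :: "'a set \<Rightarrow> ('a \<Rightarrow> 'a \<Rightarrow> bool) \<Rightarrow> 'a \<Rightarrow> 'a set" where
  "dn X lt x = {y\<in>X. lt y x}"
definition L0 :: "'a set \<Rightarrow> ('a \<Rightarrow> 'a \<Rightarrow> bool) \<Rightarrow> 'a \<Rightarrow> nat" where
  "L0 X lt x = card (dn X lt x)"
definition R0 :: "'a set \<Rightarrow> ('a \<Rightarrow> 'a \<Rightarrow> bool) \<Rightarrow> 'a \<Rightarrow> nat" where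
  "R0 X lt x = Max (L0 X lt ` {y\<in>X. \<not> lt x y})"
definition ff :: "'a set \<Rightarrow> ('a \<Rightarrow> 'a \<Rightarrow> bool) \<Rightarrow> bool" where
  "ff X lt \<longleftrightarrow> (\<forall>a\<in>X. \<forall>b\<in>X. \<forall>c\<in>X. \<forall>d\<in>X. lt a b \<and> lt c d \<longrightarrow> lt a d \<or> lt c b)"

lemma ffD: "ff X lt \<Longrightarrow> a\<in>X \<Longrightarrow> b\<in>X \<Longrightarrow> c\<in>X \<Longrightarrow> d\<in>X \<Longrightarrow> lt a b \<Longrightarrow> lt c d \<Longrightarrow> lt a d \<or> lt c b"
  unfolding ff_def by blast

lemma ff_of_io: assumes "interval_order X lt" shows "ff X lt"
proof -
  obtain L R where rep: "interval_rep X lt L R" using assms unfolding interval_order_def by blast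
  show ?thesis unfolding ff_def
  proof (intro ballI impI)
    fix a b c d assume m: "a\<in>X" "b\<in>X" "c\<in>X" "d\<in>X" and h: "lt a b \<and> lt c d"
    have "R a < L b" "R c < L d" "L b \<le> R b" using h rep m unfolding interval_rep_def by auto
    moreover have "lt a d \<longleftrightarrow> R a < L d" "lt c b \<longleftrightarrow> R c < L b" using rep m unfolding interval_rep_def by auto
    ultimately show "lt a d \<or> lt c b" by linarith
  qed
qed

lemma dn_psub:
  assumes fin: "finite X" and f: "ff X lt" and m: "x\<in>X" "y\<in>X" "z\<in>X" and "lt x y" "\<not> lt x z"
  shows "L0 X lt z < L0 X lt y"
proof -
  have "dn X lt z \<subset> dn X lt y"
  proof
    show "dn X lt z \<subseteq> dn X lt y"
    proof
      fix w assume "w \<in> dn X lt z"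
      then have "w \<in> X" "lt w z" unfolding dn_def by auto
      then have "lt w y \<or> lt x z" using ffD[OF f \<open>w\<in>X\<close> m(3) m(1) m(2)] assms by blast
      then show "w \<in> dn X lt y" using assms \<open>w\<in>X\<close> unfolding dn_def by auto
    qed
    show "dn X lt z \<noteq> dn X lt y" using assms unfolding dn_def by auto
  qed
  moreover have "finite (dn X lt y)" using fin unfolding dn_def by auto
  ultimately show ?thesis unfolding L0_def by (rule psubset_card_mono[rotated])
qed

lemma R0_ge:
  assumes fin: "finite X" and "z\<in>X" "\<not> lt x z" shows "L0 X lt z \<le> R0 X lt x"
  unfolding R0_def using assms by (intro Max_ge) auto

lemma R0_att:
  assumes fin: "finite X" and po: "strict_poset X lt" and m: "x\<in>X"
  shows "\<exists>z\<in>X. \<not> lt x z \<and> L0 X lt z = R0 X lt x"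
proof -
  have ne: "L0 X lt ` {y\<in>X. \<not> lt x y} \<noteq> {}" using m po_irr[OF po m] by auto
  have "R0 X lt x \<in> L0 X lt ` {y\<in>X. \<not> lt x y}" unfolding R0_def
    using fin ne by (intro Max_in) auto
  then show ?thesis by auto
qed

lemma L0_le: "finite X \<Longrightarrow> L0 X lt x \<le> card X"
  unfolding L0_def dn_def by (rule card_mono) auto

lemma R0_le: "finite X \<Longrightarrow> strict_poset X lt \<Longrightarrow> x\<in>X \<Longrightarrow> R0 X lt x \<le> card X"
  using R0_att L0_le by metis

lemma L0_le_R0: "finite X \<Longrightarrow> strict_poset X lt \<Longrightarrow> x\<in>X \<Longrightarrow> L0 X lt x \<le> R0 X lt x"
  using R0_ge po_irr by metis

lemma rep0:
  assumes fin: "finite X" and po: "strict_poset X lt" and f: "ff X lt" and m: "x\<in>X" "y\<in>X"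
  shows "lt x y \<longleftrightarrow> R0 X lt x < L0 X lt y"
proof
  assume h: "lt x y"
  obtain z where z: "z\<in>X" "\<not> lt x z" "L0 X lt z = R0 X lt x" using R0_att[OF fin po m(1)] by blast
  show "R0 X lt x < L0 X lt y" using dn_psub[OF fin f m z(1) h z(2)] z(3) by simp
next
  assume h: "R0 X lt x < L0 X lt y"
  show "lt x y"
  proof (rule ccontr)
    assume "\<not> lt x y"
    then have "L0 X lt y \<le> R0 X lt x" using R0_ge[OF fin m(2)] by blast
    with h show False by simp
  qed
qed

lemma key_nat: assumes "(b::nat) < M" "c*M + d \<le> a*M + b" shows "c \<le> a"
proof (rule ccontr)
  assume "\<not> c \<le> a"
  then have "Suc a \<le> c" by simp
  then have "Suc a * M \<le> c * M" by (rule mult_le_mono1)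
  then show False using assms by simp
qed

lemma rep_num:
  assumes b: "\<forall>x\<in>X. l x \<le> K \<and> r x \<le> K \<and> l x \<le> r x"
    and o: "\<forall>x\<in>X. \<forall>y\<in>X. lt x y \<longleftrightarrow> r x < l y" and M: "M = 4*(K+1)" and H: "H = 2*(K+1)"
  shows "interval_rep X lt (\<lambda>x. real (l x * M + r x)) (\<lambda>x. real (r x * M + H + l x))"
  unfolding interval_rep_def
proof (intro conjI ballI)
  fix x assume x: "x\<in>X"
  have "l x * M \<le> r x * M" using b x by (intro mult_le_mono1) auto
  moreover have "r x \<le> H" using b x H by auto
  ultimately have "l x * M + r x \<le> r x * M + H + l x" by linarith
  then show "real (l x * M + r x) \<le> real (r x * M + H + l x)" by (simp only: of_nat_le_iff)
next
  fix x y assume x: "x\<in>X" and y: "y\<in>X"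
  show "lt x y \<longleftrightarrow> real (r x * M + H + l x) < real (l y * M + r y)"
  proof (cases "r x < l y")
    case True
    then have "Suc (r x) * M \<le> l y * M" by (intro mult_le_mono1) auto
    moreover have "H + l x < M" using b x H M by auto
    ultimately have "r x * M + H + l x < l y * M + r y" by simp
    then have "real (r x * M + H + l x) < real (l y * M + r y)" by (simp only: of_nat_less_iff)
    then show ?thesis using o x y True by blast
  next
    case False
    then have "l y * M \<le> r x * M" by (intro mult_le_mono1) auto
    moreover have "r y < H" using b y H by auto
    ultimately have "\<not> r x * M + H + l x < l y * M + r y" by linarith
    then have "\<not> real (r x * M + H + l x) < real (l y * M + r y)" unfolding of_nat_less_iff .
    then show ?thesis using o x y False by blast
  qed
qed

lemma sc_num:
  assumes b: "l u \<le> K" "r u \<le> K" "l v \<le> K" "r v \<le> K" and M: "M = 4*(K+1)" and H: "H = 2*(K+1)"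
    and sc: "strictly_contained (\<lambda>x. real (l x * M + r x)) (\<lambda>x. real (r x * M + H + l x)) u v"
  shows "l v < l u \<and> r u < r v"
proof -
  have s1: "real (l v * M + r v) \<le> real (l u * M + r u)"
    and s2: "real (r u * M + H + l u) \<le> real (r v * M + H + l v)"
    and s3: "(real (l u * M + r u), real (r u * M + H + l u)) \<noteq> (real (l v * M + r v), real (r v * M + H + l v))"
    using sc unfolding strictly_contained_def by blast+
  have 1: "l v * M + r v \<le> l u * M + r u" using s1 by (metis of_nat_le_iff)
  have s2n: "r u * M + H + l u \<le> r v * M + H + l v" using s2 by (metis of_nat_le_iff)
  then have 2: "r u * M + l u \<le> r v * M + l v" by simp
  have 3: "(l u * M + r u, r u * M + H + l u) \<noteq> (l v * M + r v, r v * M + H + l v)"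
  proof
    assume "(l u * M + r u, r u * M + H + l u) = (l v * M + r v, r v * M + H + l v)"
    then have e1: "l u * M + r u = l v * M + r v" and e2: "r u * M + H + l u = r v * M + H + l v" by simp_all
    show False using s3 unfolding e1 e2 by blast
  qed
  have lt: "r u < M" "l v < M" using b M by auto
  have a1: "l v \<le> l u" using key_nat[OF lt(1) 1] .
  have a2: "r u \<le> r v" using key_nat[OF lt(2) 2] .
  have "l v \<noteq> l u"
  proof
    assume e: "l v = l u"
    then have "r v \<le> r u" using 1 by simp
    then have "r v = r u" using a2 by simp
    then show False using 3 e by simp
  qed
  moreover have "r u \<noteq> r v"
  proof
    assume e: "r u = r v"
    then have "l u \<le> l v" using 2 by simp
    then have "l v = l u" using a1 by simp
    then show False using 3 e by simp
  qed
  ultimately show ?thesis using a1 a2 by simp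
qed

lemma forced_props:
  assumes fin: "finite X" and po: "strict_poset X lt" and f: "ff X lt" and m: "u\<in>X" "v\<in>X"
    and h: "L0 X lt v < L0 X lt u" "R0 X lt u < R0 X lt v"
  shows "\<not> lt u v \<and> \<not> lt v u \<and> (\<exists>x\<in>X. lt x u \<and> \<not> lt x v \<and> \<not> lt v x)
         \<and> (\<exists>y\<in>X. lt u y \<and> \<not> lt v y \<and> \<not> lt y v)"
proof -
  have luv: "\<not> lt u v" using rep0[OF fin po f m] h L0_le_R0[OF fin po m(1)] by simp
  have lvu: "\<not> lt v u" using rep0[OF fin po f m(2) m(1)] h L0_le_R0[OF fin po m(1)] by simp
  have "\<not> dn X lt u \<subseteq> dn X lt v"
  proof
    assume "dn X lt u \<subseteq> dn X lt v"
    then have "L0 X lt u \<le> L0 X lt v" unfolding L0_def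
      using fin by (intro card_mono) (auto simp: dn_def)
    with h show False by simp
  qed
  then obtain x where x: "x\<in>X" "lt x u" "\<not> lt x v" unfolding dn_def by auto
  have "\<not> lt v x" using po_tr[OF po m(2) x(1) m(1)] x lvu by blast
  obtain z where z: "z\<in>X" "\<not> lt v z" "L0 X lt z = R0 X lt v" using R0_att[OF fin po m(2)] by blast
  have "lt u z"
  proof (rule ccontr)
    assume "\<not> lt u z"
    then have "L0 X lt z \<le> R0 X lt u" using R0_ge[OF fin z(1)] by blast
    with z h show False by simp
  qed
  moreover have "\<not> lt z v" using po_tr[OF po m(1) z(1) m(2)] \<open>lt u z\<close> luv by blast
  ultimately show ?thesis using luv lvu x \<open>\<not> lt v x\<close> z by blast
qed

lemma peeks_left_iff:
  assumes rep: "interval_rep X lt L R" and m: "x\<in>X" "u\<in>X" "v\<in>X"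
  shows "peeks_left L R x v u \<longleftrightarrow> lt x u \<and> \<not> lt x v \<and> \<not> lt v x"
proof -
  have o: "lt x u \<longleftrightarrow> R x < L u" "lt u x \<longleftrightarrow> R u < L x" "lt x v \<longleftrightarrow> R x < L v" "lt v x \<longleftrightarrow> R v < L x"
    "L x \<le> R x" "L u \<le> R u"
    using rep m unfolding interval_rep_def by auto
  show ?thesis unfolding peeks_left_def peeks_def meets_def using o by auto
qed

lemma peeks_right_iff:
  assumes rep: "interval_rep X lt L R" and m: "x\<in>X" "u\<in>X" "v\<in>X"
  shows "peeks_right L R x v u \<longleftrightarrow> lt u x \<and> \<not> lt x v \<and> \<not> lt v x"
proof -
  have o: "lt x u \<longleftrightarrow> R x < L u" "lt u x \<longleftrightarrow> R u < L x" "lt x v \<longleftrightarrow> R x < L v" "lt v x \<longleftrightarrow> R v < L x"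
    "L x \<le> R x" "L u \<le> R u"
    using rep m unfolding interval_rep_def by auto
  show ?thesis unfolding peeks_right_def peeks_def meets_def using o by auto
qed


lemma uniq_left:
  assumes po: "strict_poset X lt" and n41: "\<not> contains_induced X lt 5 four_plus_one"
    and nYd: "\<not> contains_induced X lt 5 Y_dual_poset"
    and m: "u\<in>X" "v\<in>X" "y\<in>X" "x1\<in>X" "x2\<in>X"
    and uv: "\<not>lt u v" "\<not>lt v u"
    and y: "lt u y" "\<not>lt v y" "\<not>lt y v"
    and a1: "lt x1 u" "\<not>lt x1 v" "\<not>lt v x1"
    and a2: "lt x2 u" "\<not>lt x2 v" "\<not>lt v x2"
  shows "x1 = x2"
proof (rule ccontr)
  assume ne: "x1 \<noteq> x2"
  consider "lt x1 x2" | "lt x2 x1" | "\<not>lt x1 x2" "\<not>lt x2 x1" by blast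
  then show False
  proof cases
    case 1
    show False by (rule pat41[OF po n41, of x1 x2 u y v]) (simp_all add: m uv y a1 a2 1)
  next
    case 2
    show False by (rule pat41[OF po n41, of x2 x1 u y v]) (simp_all add: m uv y a1 a2 2)
  next
    case 3
    show False by (rule patYd[OF po nYd, of y x1 x2 u v]) (simp_all add: m uv y a1 a2 3 ne)
  qed
qed

lemma uniq_right:
  assumes po: "strict_poset X lt" and n41: "\<not> contains_induced X lt 5 four_plus_one"
    and nY: "\<not> contains_induced X lt 5 Y_poset"
    and m: "u\<in>X" "v\<in>X" "x\<in>X" "y1\<in>X" "y2\<in>X"
    and uv: "\<not>lt u v" "\<not>lt v u"
    and x: "lt x u" "\<not>lt v x" "\<not>lt x v"
    and a1: "lt u y1" "\<not>lt y1 v" "\<not>lt v y1"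
    and a2: "lt u y2" "\<not>lt y2 v" "\<not>lt v y2"
  shows "y1 = y2"
proof (rule ccontr)
  assume ne: "y1 \<noteq> y2"
  consider "lt y1 y2" | "lt y2 y1" | "\<not>lt y1 y2" "\<not>lt y2 y1" by blast
  then show False
  proof cases
    case 1
    show False by (rule pat41[OF po n41, of x u y1 y2 v]) (simp_all add: m uv x a1 a2 1)
  next
    case 2
    show False by (rule pat41[OF po n41, of x u y2 y1 v]) (simp_all add: m uv x a1 a2 2)
  next
    case 3
    show False by (rule patY[OF po nY, of x y1 y2 u v]) (simp_all add: m uv x a1 a2 3 ne)
  qed
qed

lemma no_two_inside:
  assumes po: "strict_poset X lt" and f: "ff X lt"
    and n41: "\<not> contains_induced X lt 5 four_plus_one"
    and n311: "\<not> contains_induced X lt 5 three_plus_one_plus_one"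
    and nD: "\<not> contains_induced X lt 5 D_poset"
    and m: "v\<in>X" "u1\<in>X" "u2\<in>X" "x1\<in>X" "y1\<in>X" "x2\<in>X" "y2\<in>X"
    and ne: "u1 \<noteq> u2"
    and h1: "\<not>lt u1 v" "\<not>lt v u1" "lt x1 u1" "\<not>lt x1 v" "\<not>lt v x1" "lt u1 y1" "\<not>lt v y1" "\<not>lt y1 v"
    and h2: "\<not>lt u2 v" "\<not>lt v u2" "lt x2 u2" "\<not>lt x2 v" "\<not>lt v x2" "lt u2 y2" "\<not>lt v y2" "\<not>lt y2 v"
  shows False
proof -
  note tr = po_tr[OF po]
  consider "lt u1 u2" | "lt u2 u1" | "\<not>lt u1 u2" "\<not>lt u2 u1" by blast
  then show False
  proof cases
    case 1
    show False by (rule pat41[OF po n41, of x1 u1 u2 y2 v]) (simp_all add: m h1 h2 1)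
  next
    case 2
    show False by (rule pat41[OF po n41, of x2 u2 u1 y1 v]) (simp_all add: m h1 h2 2)
  next
    case 3
    note c3 = 3
    have nx: "\<not> lt u2 x1" using tr[OF m(3) m(4) m(2)] h1 3 by blast
    have ny: "\<not> lt y1 u2" using tr[OF m(2) m(5) m(3)] h1 3 by blast
    have vu2: "v \<noteq> u2" using h2 by auto
    consider "\<not>lt x1 u2" "\<not>lt u2 y1" | "lt x1 u2" "lt u2 y1" | "lt x1 u2" "\<not>lt u2 y1"
      | "\<not>lt x1 u2" "lt u2 y1" by blast
    then show False
    proof cases
      case 1
      show False by (rule pat311[OF po n311, of x1 u1 y1 v u2])
        (simp_all add: m h1 h2 c3 1 nx ny vu2)
    next
      case 2
      show False by (rule patD[OF po nD, of x1 u1 u2 y1 v]) (simp_all add: m h1 h2 c3 2 ne)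
    next
      case 3
      show False
      proof (cases "lt u1 y2")
        case True
        show False by (rule patD[OF po nD, of x1 u1 u2 y2 v]) (simp_all add: m h1 h2 c3 3 ne True)
      next
        case False
        have "lt u1 y2 \<or> lt u2 y1" using ffD[OF f m(2) m(5) m(3) m(7)] h1 h2 by blast
        then show False using False 3 by blast
      qed
    next
      case 4
      show False
      proof (cases "lt x2 u1")
        case True
        show False by (rule patD[OF po nD, of x2 u1 u2 y1 v]) (simp_all add: m h1 h2 c3 4 ne True)
      next
        case False
        have "lt x1 u2 \<or> lt x2 u1" using ffD[OF f m(4) m(2) m(6) m(3)] h1 h2 by blast
        then show False using False 4 by blast
      qed
    qed
  qed
qed

lemma down_sub:
  assumes po: "strict_poset X lt" and f: "ff X lt"
    and m: "u\<in>X" "v1\<in>X" "v2\<in>X" "x1\<in>X" "x2\<in>X" "z\<in>X"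
    and h: "\<not>lt v2 u" "lt x1 u" "\<not>lt x1 v1" "lt x2 u" "\<not>lt x2 v2"
    and ul2: "\<forall>x\<in>X. lt x u \<and> \<not>lt x v2 \<and> \<not>lt v2 x \<longrightarrow> x = x2"
    and z: "lt z v1"
  shows "lt z v2"
proof (rule ccontr)
  note tr = po_tr[OF po]
  assume nz: "\<not> lt z v2"
  have zu: "lt z u" using ffD[OF f m(6) m(2) m(4) m(1)] z h by blast
  have "\<not> lt v2 z" using tr[OF m(3) m(6) m(1)] zu h by blast
  then have "z = x2" using ul2 m zu nz by blast
  then have x2v1: "lt x2 v1" using z by simp
  have "lt x1 v2"
  proof (rule ccontr)
    assume a: "\<not> lt x1 v2"
    have "\<not> lt v2 x1" using tr[OF m(3) m(4) m(1)] h by blast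
    then have "x1 = x2" using ul2 m h a by blast
    then show False using x2v1 h by simp
  qed
  then have "lt x2 v2 \<or> lt x1 v1" using ffD[OF f m(5) m(2) m(4) m(3)] x2v1 by blast
  then show False using h by blast
qed

lemma up_sub:
  assumes po: "strict_poset X lt" and f: "ff X lt"
    and m: "u\<in>X" "v1\<in>X" "v2\<in>X" "y1\<in>X" "y2\<in>X" "z\<in>X"
    and h: "\<not>lt u v2" "lt u y1" "\<not>lt v1 y1" "lt u y2" "\<not>lt v2 y2"
    and ur2: "\<forall>y\<in>X. lt u y \<and> \<not>lt y v2 \<and> \<not>lt v2 y \<longrightarrow> y = y2"
    and z: "lt v1 z"
  shows "lt v2 z"
proof (rule ccontr)
  note tr = po_tr[OF po]
  assume nz: "\<not> lt v2 z"
  have uz: "lt u z" using ffD[OF f m(1) m(4) m(2) m(6)] z h by blast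
  have "\<not> lt z v2" using tr[OF m(1) m(6) m(3)] uz h by blast
  then have "z = y2" using ur2 m uz nz by blast
  then have v1y2: "lt v1 y2" using z by simp
  have "lt v2 y1"
  proof (rule ccontr)
    assume a: "\<not> lt v2 y1"
    have "\<not> lt y1 v2" using tr[OF m(1) m(4) m(3)] h by blast
    then have "y1 = y2" using ur2 m h a by blast
    then show False using v1y2 h by simp
  qed
  then have "lt v1 y1 \<or> lt v2 y2" using ffD[OF f m(2) m(5) m(3) m(4)] v1y2 by blast
  then show False using h by blast
qed

lemma no_two_outside:
  assumes po: "strict_poset X lt" and f: "ff X lt" and tf: "twin_free X lt"
    and m: "u\<in>X" "v1\<in>X" "v2\<in>X" "x1\<in>X" "x2\<in>X" "y1\<in>X" "y2\<in>X"
    and ne: "v1 \<noteq> v2"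
    and h1: "\<not>lt u v1" "\<not>lt v1 u" "lt x1 u" "\<not>lt x1 v1" "lt u y1" "\<not>lt v1 y1"
    and h2: "\<not>lt u v2" "\<not>lt v2 u" "lt x2 u" "\<not>lt x2 v2" "lt u y2" "\<not>lt v2 y2"
    and ul1: "\<forall>x\<in>X. lt x u \<and> \<not>lt x v1 \<and> \<not>lt v1 x \<longrightarrow> x = x1"
    and ul2: "\<forall>x\<in>X. lt x u \<and> \<not>lt x v2 \<and> \<not>lt v2 x \<longrightarrow> x = x2"
    and ur1: "\<forall>y\<in>X. lt u y \<and> \<not>lt y v1 \<and> \<not>lt v1 y \<longrightarrow> y = y1"
    and ur2: "\<forall>y\<in>X. lt u y \<and> \<not>lt y v2 \<and> \<not>lt v2 y \<longrightarrow> y = y2"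
  shows False
proof -
  have "twins X lt v1 v2" unfolding twins_def
  proof (intro ballI conjI iffI)
    fix z assume z: "z \<in> X"
    show "lt z v2" if "lt z v1"
      using down_sub[OF po f m(1) m(2) m(3) m(4) m(5) z] h1 h2 ul2 that by blast
    show "lt z v1" if "lt z v2"
      using down_sub[OF po f m(1) m(3) m(2) m(5) m(4) z] h1 h2 ul1 that by blast
    show "lt v2 z" if "lt v1 z"
      using up_sub[OF po f m(1) m(2) m(3) m(6) m(7) z] h1 h2 ur2 that by blast
    show "lt v1 z" if "lt v2 z"
      using up_sub[OF po f m(1) m(3) m(2) m(7) m(6) z] h1 h2 ur1 that by blast
  qed
  then show False using tf ne m unfolding twin_free_def by blast
qed


theorem proposition13:
  fixes X :: "'a set" and lt :: "'a \<Rightarrow> 'a \<Rightarrow> bool"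
  assumes "finite X"
    and "interval_order X lt"
    and "twin_free X lt"
    and "\<not> contains_induced X lt 5 four_plus_one"
    and "\<not> contains_induced X lt 5 three_plus_one_plus_one"
    and "\<not> contains_induced X lt 6 Z_poset"
    and "\<not> contains_induced X lt 5 D_poset"
    and "\<not> contains_induced X lt 5 Y_poset"
    and "\<not> contains_induced X lt 5 Y_dual_poset"
  shows "\<exists>L R. interval_rep X lt L R
     \<and> (\<forall>v\<in>X. \<forall>u1\<in>X. \<forall>u2\<in>X. u1 \<noteq> u2 \<and> u1 \<noteq> v \<and> u2 \<noteq> v \<longrightarrow>
            \<not> (strictly_contained L R u1 v \<and> strictly_contained L R u2 v))
     \<and> (\<forall>u\<in>X. \<forall>v1\<in>X. \<forall>v2\<in>X. v1 \<noteq> v2 \<and> v1 \<noteq> u \<and> v2 \<noteq> u \<longrightarrow>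
            \<not> (strictly_contained L R u v1 \<and> strictly_contained L R u v2))
     \<and> (\<forall>u\<in>X. \<forall>v\<in>X. strictly_contained L R u v \<longrightarrow>
            (\<exists>!x. x \<in> X \<and> peeks_left L R x v u) \<and> (\<exists>!y. y \<in> X \<and> peeks_right L R y v u))"
proof -
  note fin = assms(1)
  have po: "strict_poset X lt" using assms(2) unfolding interval_order_def by blast
  have f: "ff X lt" using ff_of_io[OF assms(2)] .
  define K where "K = card X"
  define M where "M = 4*(K+1)"
  define H where "H = 2*(K+1)"
  define L where "L = (\<lambda>x. real (L0 X lt x * M + R0 X lt x))"
  define R where "R = (\<lambda>x. real (R0 X lt x * M + H + L0 X lt x))"
  have bnd: "\<forall>x\<in>X. L0 X lt x \<le> K \<and> R0 X lt x \<le> K \<and> L0 X lt x \<le> R0 X lt x"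
    using L0_le[OF fin] R0_le[OF fin po] L0_le_R0[OF fin po] unfolding K_def by blast
  have o: "\<forall>x\<in>X. \<forall>y\<in>X. lt x y \<longleftrightarrow> R0 X lt x < L0 X lt y" using rep0[OF fin po f] by blast
  have rep: "interval_rep X lt L R" unfolding L_def R_def by (rule rep_num[OF bnd o M_def H_def])
  have scP: "\<not> lt u v \<and> \<not> lt v u \<and> (\<exists>x\<in>X. lt x u \<and> \<not> lt x v \<and> \<not> lt v x)
         \<and> (\<exists>y\<in>X. lt u y \<and> \<not> lt v y \<and> \<not> lt y v)"
    if hh: "u\<in>X" "v\<in>X" "strictly_contained L R u v" for u v
  proof -
    have "L0 X lt v < L0 X lt u \<and> R0 X lt u < R0 X lt v"
      using sc_num[of "L0 X lt" u K "R0 X lt" v M H] bnd hh M_def H_def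
      unfolding L_def R_def by blast
    then show ?thesis using forced_props[OF fin po f hh(1,2)] by blast
  qed
  have UL: "x1 = x2" if hh: "u\<in>X" "v\<in>X" "strictly_contained L R u v" "x1\<in>X" "x2\<in>X"
    "lt x1 u \<and> \<not> lt x1 v \<and> \<not> lt v x1" "lt x2 u \<and> \<not> lt x2 v \<and> \<not> lt v x2" for u v x1 x2
  proof -
    obtain y where "y\<in>X" "lt u y" "\<not> lt v y" "\<not> lt y v" "\<not> lt u v" "\<not> lt v u"
      using scP[OF hh(1-3)] by blast
    then show ?thesis using uniq_left[OF po assms(4) assms(9) hh(1,2) \<open>y\<in>X\<close> hh(4,5)] hh by blast
  qed
  have UR: "y1 = y2" if hh: "u\<in>X" "v\<in>X" "strictly_contained L R u v" "y1\<in>X" "y2\<in>X"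
    "lt u y1 \<and> \<not> lt y1 v \<and> \<not> lt v y1" "lt u y2 \<and> \<not> lt y2 v \<and> \<not> lt v y2" for u v y1 y2
  proof -
    obtain x where "x\<in>X" "lt x u" "\<not> lt x v" "\<not> lt v x" "\<not> lt u v" "\<not> lt v u"
      using scP[OF hh(1-3)] by blast
    then show ?thesis using uniq_right[OF po assms(4) assms(8) hh(1,2) \<open>x\<in>X\<close> hh(4,5)] hh by blast
  qed
  have P1: "\<forall>v\<in>X. \<forall>u1\<in>X. \<forall>u2\<in>X. u1 \<noteq> u2 \<and> u1 \<noteq> v \<and> u2 \<noteq> v \<longrightarrow>
            \<not> (strictly_contained L R u1 v \<and> strictly_contained L R u2 v)"
  proof (intro ballI impI notI)
    fix v u1 u2 assume m: "v\<in>X" "u1\<in>X" "u2\<in>X" and ne: "u1 \<noteq> u2 \<and> u1 \<noteq> v \<and> u2 \<noteq> v"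
      and sc: "strictly_contained L R u1 v \<and> strictly_contained L R u2 v"
    obtain x1 y1 where 1: "x1\<in>X" "y1\<in>X" "\<not>lt u1 v" "\<not>lt v u1" "lt x1 u1" "\<not>lt x1 v" "\<not>lt v x1"
      "lt u1 y1" "\<not>lt v y1" "\<not>lt y1 v" using scP[OF m(2) m(1)] sc by blast
    obtain x2 y2 where 2: "x2\<in>X" "y2\<in>X" "\<not>lt u2 v" "\<not>lt v u2" "lt x2 u2" "\<not>lt x2 v" "\<not>lt v x2"
      "lt u2 y2" "\<not>lt v y2" "\<not>lt y2 v" using scP[OF m(3) m(1)] sc by blast
    show False
      by (rule no_two_inside[OF po f assms(4) assms(5) assms(7) m 1(1) 1(2) 2(1) 2(2)])
        (use ne 1 2 in simp_all)
  qed
  have P2: "\<forall>u\<in>X. \<forall>v1\<in>X. \<forall>v2\<in>X. v1 \<noteq> v2 \<and> v1 \<noteq> u \<and> v2 \<noteq> u \<longrightarrow>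
            \<not> (strictly_contained L R u v1 \<and> strictly_contained L R u v2)"
  proof (intro ballI impI notI)
    fix u v1 v2 assume m: "u\<in>X" "v1\<in>X" "v2\<in>X" and ne: "v1 \<noteq> v2 \<and> v1 \<noteq> u \<and> v2 \<noteq> u"
      and sc: "strictly_contained L R u v1 \<and> strictly_contained L R u v2"
    obtain x1 y1 where 1: "x1\<in>X" "y1\<in>X" "\<not>lt u v1" "\<not>lt v1 u" "lt x1 u" "\<not>lt x1 v1" "\<not>lt v1 x1"
      "lt u y1" "\<not>lt v1 y1" "\<not>lt y1 v1" using scP[OF m(1) m(2)] sc by blast
    obtain x2 y2 where 2: "x2\<in>X" "y2\<in>X" "\<not>lt u v2" "\<not>lt v2 u" "lt x2 u" "\<not>lt x2 v2" "\<not>lt v2 x2"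
      "lt u y2" "\<not>lt v2 y2" "\<not>lt y2 v2" using scP[OF m(1) m(3)] sc by blast
    have ul1: "\<forall>x\<in>X. lt x u \<and> \<not>lt x v1 \<and> \<not>lt v1 x \<longrightarrow> x = x1"
      using UL[OF m(1) m(2)] sc 1 by blast
    have ul2: "\<forall>x\<in>X. lt x u \<and> \<not>lt x v2 \<and> \<not>lt v2 x \<longrightarrow> x = x2"
      using UL[OF m(1) m(3)] sc 2 by blast
    have ur1: "\<forall>y\<in>X. lt u y \<and> \<not>lt y v1 \<and> \<not>lt v1 y \<longrightarrow> y = y1"
      using UR[OF m(1) m(2)] sc 1 by blast
    have ur2: "\<forall>y\<in>X. lt u y \<and> \<not>lt y v2 \<and> \<not>lt v2 y \<longrightarrow> y = y2"
      using UR[OF m(1) m(3)] sc 2 by blast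
    show False
      by (rule no_two_outside[OF po f assms(3) m 1(1) 2(1) 1(2) 2(2) _ _ _ _ _ _ _ _ _ _ _ _ _ ul1 ul2 ur1 ur2])
        (use ne 1 2 in simp_all)
  qed
  have P3: "\<forall>u\<in>X. \<forall>v\<in>X. strictly_contained L R u v \<longrightarrow>
            (\<exists>!x. x \<in> X \<and> peeks_left L R x v u) \<and> (\<exists>!y. y \<in> X \<and> peeks_right L R y v u)"
  proof (intro ballI impI conjI)
    fix u v assume m: "u\<in>X" "v\<in>X" and sc: "strictly_contained L R u v"
    have pl: "x \<in> X \<and> peeks_left L R x v u \<longleftrightarrow> x \<in> X \<and> (lt x u \<and> \<not> lt x v \<and> \<not> lt v x)" for x
      using peeks_left_iff[OF rep _ m] by blast
    have pr: "x \<in> X \<and> peeks_right L R x v u \<longleftrightarrow> x \<in> X \<and> (lt u x \<and> \<not> lt x v \<and> \<not> lt v x)" for x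
      using peeks_right_iff[OF rep _ m] by blast
    obtain x y where xy: "x\<in>X" "lt x u" "\<not> lt x v" "\<not> lt v x" "y\<in>X" "lt u y" "\<not> lt v y" "\<not> lt y v"
      using scP[OF m sc] by blast
    show "\<exists>!x. x \<in> X \<and> peeks_left L R x v u"
      unfolding pl using UL[OF m sc] xy by blast
    show "\<exists>!y. y \<in> X \<and> peeks_right L R y v u"
      unfolding pr using UR[OF m sc] xy by blast
  qed
  show ?thesis using rep P1 P2 P3 by blast
qed

end
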